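(* For all integers $0\le k\le n$, $A_{k,n}(q)=\sum_{i=0}^{n}\binom{n}{i}E_{k,n-i}(q)$.
   Context: Place $1,\dots,n$ clockwise on a circle. Distinct $p_1,\dots,p_m\in\{1,\dots,n\}$ are in clockwise cyclic order if $(p_2-p_1)\bmod n<(p_3-p_1)\bmod n<\dots<(p_m-p_1)\bmod n$ (residues in $\{0,\dots,n-1\}$). A decorated permutation of $[n]$ is a permutation $\pi\in S_n$ together with a coloring of each fixed point as "clockwise" or "counterclockwise". An ordered pair $(i,j)$, $i\ne j$, is aligned if the entries of $(i,\pi(i),\pi(j),j)$ are pairwise distinct except that possibly $i=\pi(i)$ and/or $j=\pi(j)$, the distinct entries in this order are in clockwise cyclic order, $i$ is colored counterclockwise if $\pi(i)=i$, and $j$ is colored clockwise if $\pi(j)=j$. An alignment is an unordered pair $\{i,j\}$ such that $(i,j)$ or $(j,i)$ is aligned; $\mathrm{al}(\pi)$ is the number of alignments. $K(\pi)=\#\{i:\pi(i)>i\}+\#\{\text{fixed points colored counterclockwise}\}$. Define $A_{k,n}(q)=\sum q^{k(n-k)-\mathrm{al}(\pi)}$ over decorated permutations $\pi$ of $[n]$ with $K(\pi)=k$ (by Postnikov's theorem this is the generating function of the cells of the totally nonnegative Grassmannian $Gr^+_{k,n}$ by dimension). An ordinary permutation $\pi\in S_m$ is regarded as the decorated permutation with all fixed points colored counterclockwise; $i$ is a weak excedence of $\pi$ if $\pi(i)\ge i$. For $m\ge0$, $E_{k,m}(q)=\sum q^{k(m-k)-\mathrm{al}(\pi)}$ over $\pi\in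 S_m$ with exactly $k$ weak excedences (an empty sum, hence $0$, if there are none). *)

theory Defs
  imports "HOL-Combinatorics.Permutations" "HOL-Computational_Algebra.Polynomial"
begin

definition cw_order :: "nat \<Rightarrow> nat list \<Rightarrow> bool" where
  "cw_order n ps \<longleftrightarrow> sorted_wrt (<) (map (\<lambda>p. (int p - int (hd ps)) mod int n) ps)"

text \<open>A decorated permutation of [n] is a pair (pi, C) with pi permuting {1..n} and
C the set of fixed points coloured counterclockwise (the others are clockwise).\<close>
definition decorated_perms :: "nat \<Rightarrow> ((nat \<Rightarrow> nat) \<times> nat set) set" where
  "decorated_perms n = {(\<pi>, C). \<pi> permutes {1..n} \<and> C \<subseteq> {i\<in>{1..n}. \<pi> i = i}}"

definition aligned :: "nat \<Rightarrow> (nat \<Rightarrow> nat) \<Rightarrow> nat set \<Rightarrow> nat \<Rightarrow> nat \<Rightarrow> bool" where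
  "aligned n \<pi> C i j \<longleftrightarrow>
     i \<noteq> j \<and> i \<noteq> \<pi> j \<and> \<pi> i \<noteq> j \<and> \<pi> i \<noteq> \<pi> j \<and>
     cw_order n (remdups [i, \<pi> i, \<pi> j, j]) \<and>
     (\<pi> i = i \<longrightarrow> i \<in> C) \<and> (\<pi> j = j \<longrightarrow> j \<notin> C)"

definition al :: "nat \<Rightarrow> (nat \<Rightarrow> nat) \<Rightarrow> nat set \<Rightarrow> nat" where
  "al n \<pi> C = card {{i, j} | i j. i \<in> {1..n} \<and> j \<in> {1..n} \<and> aligned n \<pi> C i j}"

definition Kstat :: "nat \<Rightarrow> (nat \<Rightarrow> nat) \<Rightarrow> nat set \<Rightarrow> nat" where
  "Kstat n \<pi> C = card {i\<in>{1..n}. \<pi> i > i} + card C"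

definition A_poly :: "nat \<Rightarrow> nat \<Rightarrow> int poly" where
  "A_poly k n = (\<Sum>(\<pi>, C) \<in> {(\<pi>, C) \<in> decorated_perms n. Kstat n \<pi> C = k}.
                   monom 1 (k * (n - k) - al n \<pi> C))"

text \<open>Ordinary permutation: all fixed points coloured counterclockwise.\<close>
definition weak_exc :: "nat \<Rightarrow> (nat \<Rightarrow> nat) \<Rightarrow> nat" where
  "weak_exc m \<pi> = card {i\<in>{1..m}. \<pi> i \<ge> i}"

definition E_poly :: "nat \<Rightarrow> nat \<Rightarrow> int poly" where
  "E_poly k m = (\<Sum>\<pi> \<in> {\<pi>. \<pi> permutes {1..m} \<and> weak_exc m \<pi> = k}.
                   monom 1 (k * (m - k) - al m \<pi> {i\<in>{1..m}. \<pi> i = i}))"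

end

theory Submission
  imports Defs "HOL-Library.Infinite_Set"
begin

definition Rcw :: "nat \<Rightarrow> nat \<Rightarrow> nat \<Rightarrow> bool" where
  "Rcw p a b \<longleftrightarrow> (if p \<le> a then (p \<le> b \<and> a < b) \<or> b < p else b < p \<and> a < b)"

lemma key_less:
  assumes "a \<in> {1..N}" "b \<in> {1..N}" "p \<in> {1..N}"
  shows "(int a - int p) mod int N < (int b - int p) mod int N \<longleftrightarrow> Rcw p a b"
proof -
  have ka: "(int a - int p) mod int N = (if p \<le> a then int a - int p else int a - int p + int N)"
    using assms by (auto simp: mod_pos_pos_trivial intro!: mod_pos_pos_trivial[of "int a - int p + int N" "int N", simplified mod_add_self2] )
  have kb: "(int b - int p) mod int N = (if p \<le> b then int b - int p else int b - int p + int N)"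
    using assms by (auto simp: mod_pos_pos_trivial intro!: mod_pos_pos_trivial[of "int b - int p + int N" "int N", simplified mod_add_self2] )
  show ?thesis unfolding ka kb Rcw_def using assms by auto
qed

lemma sorted_wrt_cong:
  "(\<And>a b. a \<in> set xs \<Longrightarrow> b \<in> set xs \<Longrightarrow> P a b = Q a b) \<Longrightarrow> xs = ys \<Longrightarrow> sorted_wrt P xs = sorted_wrt Q ys"
  by (induction xs arbitrary: ys) auto

lemma cw_char:
  assumes "set ps \<subseteq> {1..N}"
  shows "cw_order N ps \<longleftrightarrow> sorted_wrt (Rcw (hd ps)) ps"
proof (cases ps)
  case Nil then show ?thesis by (simp add: cw_order_def)
next
  case (Cons p qs)
  have "cw_order N ps \<longleftrightarrow> sorted_wrt (\<lambda>a b. (int a - int p) mod int N < (int b - int p) mod int N) ps"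
    unfolding cw_order_def Cons by (simp add: sorted_wrt_map)
  also have "\<dots> \<longleftrightarrow> sorted_wrt (Rcw p) ps"
  proof (rule sorted_wrt_cong)
    fix a b assume "a \<in> set ps" "b \<in> set ps"
    then show "((int a - int p) mod int N < (int b - int p) mod int N) = Rcw p a b"
      using assms Cons by (intro key_less) auto
  qed simp
  finally show ?thesis using Cons by simp
qed

lemma cw_map_mono:
  assumes "set ps \<subseteq> S" "S \<subseteq> {1..N}" "f ` S \<subseteq> {1..M}" "strict_mono_on S f"
  shows "cw_order M (map f ps) \<longleftrightarrow> cw_order N ps"
proof (cases ps)
  case Nil then show ?thesis by (simp add: cw_order_def)
next
  case (Cons p qs)
  have "cw_order M (map f ps) \<longleftrightarrow> sorted_wrt (Rcw (f p)) (map f ps)"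
    using assms Cons by (subst cw_char) auto
  also have "\<dots> \<longleftrightarrow> sorted_wrt (\<lambda>a b. Rcw (f p) (f a) (f b)) ps" by (simp add: sorted_wrt_map)
  also have "\<dots> \<longleftrightarrow> sorted_wrt (Rcw p) ps"
  proof (rule sorted_wrt_cong)
    fix a b assume "a \<in> set ps" "b \<in> set ps"
    then have "a \<in> S" "b \<in> S" "p \<in> S" using assms Cons by auto
    then show "Rcw (f p) (f a) (f b) = Rcw p a b"
      unfolding Rcw_def using strict_mono_on_less[OF assms(4)] strict_mono_on_less_eq[OF assms(4)]
      by (metis (no_types, lifting) )
  qed simp
  also have "\<dots> \<longleftrightarrow> cw_order N ps" using assms Cons by (subst cw_char) auto
  finally show ?thesis .
qed

lemma remdups_map_inj:
  "inj_on f (set xs) \<Longrightarrow> remdups (map f xs) = map f (remdups xs)"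
  by (induction xs) (auto simp: inj_on_def)

lemma cross_count:
  fixes \<pi> :: "nat \<Rightarrow> nat" and n w :: nat
  assumes p: "\<pi> permutes {1..n}" and w: "w \<in> {1..n}" "\<pi> w = w"
  shows "card {x\<in>{1..n}. x < w \<and> w < \<pi> x} = card {x\<in>{1..n}. \<pi> x < w \<and> w < x}"
proof -
  define L where "L = {x\<in>{1..n}. x < w}"
  define L1 where "L1 = {x\<in>L. \<pi> x \<in> L}"
  define B where "B = {x\<in>{1..n}. x < w \<and> w < \<pi> x}"
  define B' where "B' = {x\<in>{1..n}. \<pi> x < w \<and> w < x}"
  have inj: "inj \<pi>" using p permutes_inj by blast
  have pin: "\<pi> x \<in> {1..n}" if "x \<in> {1..n}" for x by (rule iffD2[OF permutes_in_image[OF p] that])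
  have pne: "\<pi> x \<noteq> w" if "x \<noteq> w" for x proof
    assume "\<pi> x = w" then have "\<pi> x = \<pi> w" using w by simp
    then show False using injD[OF inj] that by blast
  qed
  have LB: "L = L1 \<union> B"
  proof (rule set_eqI)
    fix x show "x \<in> L \<longleftrightarrow> x \<in> L1 \<union> B"
    proof (cases "x \<in> {1..n} \<and> x < w")
      case True
      have "x \<noteq> w" using True by simp
      then have "\<pi> x \<noteq> w" by (rule pne)
      moreover have "\<pi> x \<in> {1..n}" using True pin by blast
      ultimately show ?thesis using True unfolding L_def L1_def B_def by auto
    next
      case False then show ?thesis unfolding L_def L1_def B_def by blast
    qed
  qed
  have d1: "L1 \<inter> B = {}" unfolding L_def L1_def B_def by auto
  have fin: "finite L1" "finite B" "finite B'" unfolding L_def L1_def B_def B'_def by auto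
  have c1: "card L = card L1 + card B" unfolding LB by (rule card_Un_disjoint[OF fin(1,2) d1])
  have img: "L = \<pi> ` (L1 \<union> B')"
  proof
    show "\<pi> ` (L1 \<union> B') \<subseteq> L"
    proof
      fix y assume "y \<in> \<pi> ` (L1 \<union> B')"
      then obtain x where x: "x \<in> L1 \<union> B'" "y = \<pi> x" by blast
      show "y \<in> L"
      proof (cases "x \<in> L1")
        case True then show ?thesis using x unfolding L1_def by simp
      next
        case False
        then have "x \<in> B'" using x by simp
        then have "x \<in> {1..n}" "\<pi> x < w" unfolding B'_def by simp_all
        moreover have "\<pi> x \<in> {1..n}" using pin \<open>x \<in> {1..n}\<close> by blast
        ultimately show ?thesis using x unfolding L_def by simp
      qed
    qed
    show "L \<subseteq> \<pi> ` (L1 \<union> B')"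
    proof
      fix y assume y: "y \<in> L"
      then have yn: "y \<in> {1..n}" and yw: "y < w" unfolding L_def by simp_all
      have "y \<in> \<pi> ` {1..n}" using permutes_image[OF p] yn by simp
      then obtain x where x: "x \<in> {1..n}" "\<pi> x = y" by blast
      have "x \<noteq> w" using x yw w(2) by auto
      have "x \<in> L1 \<union> B'"
      proof (cases "x < w")
        case True
        then have "x \<in> L" using x(1) unfolding L_def by simp
        then show ?thesis using y x(2) unfolding L1_def by simp
      next
        case False
        then have "w < x" using \<open>x \<noteq> w\<close> by simp
        then show ?thesis using x yw unfolding B'_def by simp
      qed
      then show "y \<in> \<pi> ` (L1 \<union> B')" using x by blast
    qed
  qed
  have d2: "L1 \<inter> B' = {}" unfolding L_def L1_def B'_def by auto
  have "card L = card (L1 \<union> B')" unfolding img[symmetric]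
    by (metis img card_image inj_on_subset[OF inj] subset_UNIV)
  also have "\<dots> = card L1 + card B'" by (rule card_Un_disjoint[OF fin(1,3) d2])
  finally show ?thesis using c1 unfolding B_def B'_def by simp
qed


lemma cw2:
  assumes "x \<in> {1..n}" "w \<in> {1..n}" "x \<noteq> w"
  shows "cw_order n [x, w]"
proof -
  have "sorted_wrt (Rcw x) [x, w]" using assms(3) by (auto simp: Rcw_def)
  then show ?thesis using assms by (subst cw_char) auto
qed

lemma cw3:
  assumes "x \<in> {1..n}" "a \<in> {1..n}" "w \<in> {1..n}" "x \<noteq> a" "x \<noteq> w" "a \<noteq> w"
  shows "cw_order n [x, a, w] \<longleftrightarrow> (x < a \<and> \<not> (x < w \<and> w < a)) \<or> (a < x \<and> a < w \<and> w < x)"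
proof -
  have "cw_order n [x, a, w] \<longleftrightarrow> sorted_wrt (Rcw x) [x, a, w]"
    using assms by (subst cw_char) auto
  also have "\<dots> \<longleftrightarrow> Rcw x x a \<and> Rcw x x w \<and> Rcw x a w" by simp
  also have "\<dots> \<longleftrightarrow> (x < a \<and> \<not> (x < w \<and> w < a)) \<or> (a < x \<and> a < w \<and> w < x)"
    using assms(4-6) unfolding Rcw_def by (cases "x < a"; cases "x < w"; cases "a < w") auto
  finally show ?thesis .
qed

lemma aligned_fixed_iff:
  assumes d: "(\<pi>, C) \<in> decorated_perms n" and w: "w \<in> {1..n}" "\<pi> w = w" "w \<notin> C"
    and x: "x \<in> {1..n}"
  shows "aligned n \<pi> C x w \<longleftrightarrow> x \<in> C \<or> (x < \<pi> x \<and> \<not> (x < w \<and> w < \<pi> x)) \<or> (\<pi> x < x \<and> \<pi> x < w \<and> w < x)"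
proof -
  have p: "\<pi> permutes {1..n}" and C: "C \<subseteq> {i\<in>{1..n}. \<pi> i = i}" using d unfolding decorated_perms_def by auto
  have inj: "inj \<pi>" using p permutes_inj by blast
  have pin: "\<pi> x \<in> {1..n}" by (rule iffD2[OF permutes_in_image[OF p] x])
  show ?thesis
  proof (cases "x = w")
    case True then show ?thesis using w unfolding aligned_def by auto
  next
    case xw: False
    have pne: "\<pi> x \<noteq> w"
    proof
      assume "\<pi> x = w" then have "\<pi> x = \<pi> w" using w by simp
      then show False using injD[OF inj] xw by blast
    qed
    show ?thesis
    proof (cases "\<pi> x = x")
      case True
      have r: "remdups [x, \<pi> x, \<pi> w, w] = [x, w]" using True w xw by simp
      have c: "cw_order n [x, w]" using x w xw by (intro cw2)
      have "aligned n \<pi> C x w \<longleftrightarrow> x \<in> C" unfolding aligned_def r using c True w xw by simp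
      then show ?thesis using True by simp
    next
      case False
      have xC: "x \<notin> C" using C False by auto
      have r: "remdups [x, \<pi> x, \<pi> w, w] = [x, \<pi> x, w]" using False w xw pne by simp
      have c: "cw_order n [x, \<pi> x, w] \<longleftrightarrow> (x < \<pi> x \<and> \<not> (x < w \<and> w < \<pi> x)) \<or> (\<pi> x < x \<and> \<pi> x < w \<and> w < x)"
        using x w(1) pin xw pne False by (intro cw3) auto
      have "aligned n \<pi> C x w \<longleftrightarrow> cw_order n [x, \<pi> x, w]"
        unfolding aligned_def r using False w xw pne xC by simp
      then show ?thesis using c xC by simp
    qed
  qed
qed

lemma count_aligned_fixed:
  assumes d: "(\<pi>, C) \<in> decorated_perms n" and w: "w \<in> {1..n}" "\<pi> w = w" "w \<notin> C"
  shows "card {x\<in>{1..n}. aligned n \<pi> C x w} = Kstat n \<pi> C"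
proof -
  have p: "\<pi> permutes {1..n}" and C: "C \<subseteq> {i\<in>{1..n}. \<pi> i = i}" using d unfolding decorated_perms_def by auto
  define E where "E = {x\<in>{1..n}. x < \<pi> x}"
  define B where "B = {x\<in>{1..n}. x < w \<and> w < \<pi> x}"
  define B' where "B' = {x\<in>{1..n}. \<pi> x < w \<and> w < x}"
  have eq: "{x\<in>{1..n}. aligned n \<pi> C x w} = C \<union> (E - B) \<union> B'"
  proof (rule set_eqI)
    fix x
    show "x \<in> {x\<in>{1..n}. aligned n \<pi> C x w} \<longleftrightarrow> x \<in> C \<union> (E - B) \<union> B'"
    proof (cases "x \<in> {1..n}")
      case True
      show ?thesis using aligned_fixed_iff[OF d w True] True unfolding E_def B_def B'_def by auto
    next
      case False
      then show ?thesis using C unfolding E_def B_def B'_def by auto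
    qed
  qed
  have finC: "finite C" by (rule finite_subset[OF C]) simp
  have fin: "finite E" "finite B" "finite B'" unfolding E_def B_def B'_def by auto
  have BE: "B \<subseteq> E" unfolding B_def E_def by auto
  have CE: "C \<inter> (E - B) = {}" using C unfolding E_def by auto
  have CEB: "(C \<union> (E - B)) \<inter> B' = {}" using C unfolding E_def B'_def by auto
  have "card (C \<union> (E - B) \<union> B') = card (C \<union> (E - B)) + card B'"
    by (rule card_Un_disjoint) (use fin finC CEB in auto)
  also have "card (C \<union> (E - B)) = card C + card (E - B)"
    by (rule card_Un_disjoint) (use fin finC CE in auto)
  also have "card (E - B) = card E - card B" using BE fin by (simp add: card_Diff_subset)
  also have "card B' = card B" unfolding B_def B'_def using cross_count[OF p w(1,2)] by simp
  finally have "card {x\<in>{1..n}. aligned n \<pi> C x w} = card C + (card E - card B) + card B" using eq by simp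
  also have "\<dots> = card C + card E" using BE fin card_mono by fastforce
  finally show ?thesis unfolding Kstat_def E_def by simp
qed

definition cwfix :: "nat \<Rightarrow> (nat \<Rightarrow> nat) \<times> nat set \<Rightarrow> nat set" where
  "cwfix n p = {i\<in>{1..n}. fst p i = i} - snd p"

locale relab =
  fixes n m :: nat and W :: "nat set" and g :: "nat \<Rightarrow> nat"
  assumes Wsub: "W \<subseteq> {1..n}"
    and gmono: "strict_mono_on {1..m} g"
    and gbij: "bij_betw g {1..m} ({1..n} - W)"
begin

abbreviation "TT \<equiv> {1..n} - W"
definition "h = the_inv_into {1..m} g"

lemma ginj: "inj_on g {1..m}" using gbij bij_betw_def by blast
lemma g_in: "y \<in> {1..m} \<Longrightarrow> g y \<in> TT" using gbij bij_betwE by blast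
lemma h_in: "x \<in> TT \<Longrightarrow> h x \<in> {1..m}"
  unfolding h_def using bij_betw_the_inv_into[OF gbij] bij_betwE by blast
lemma gh: "x \<in> TT \<Longrightarrow> g (h x) = x"
  unfolding h_def by (rule f_the_inv_into_f_bij_betw[OF gbij])
lemma hg: "y \<in> {1..m} \<Longrightarrow> h (g y) = y"
  unfolding h_def by (rule the_inv_into_f_f[OF ginj])
lemma hbij: "bij_betw h TT {1..m}"
  unfolding h_def by (rule bij_betw_the_inv_into[OF gbij])
lemma g_eq: "y \<in> {1..m} \<Longrightarrow> z \<in> {1..m} \<Longrightarrow> g y = g z \<longleftrightarrow> y = z"
  using ginj inj_on_eq_iff by metis
lemma g_less: "y \<in> {1..m} \<Longrightarrow> z \<in> {1..m} \<Longrightarrow> g y < g z \<longleftrightarrow> y < z"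
  using strict_mono_on_less[OF gmono] by blast
lemma g_img: "g ` {1..m} \<subseteq> {1..n}" using g_in by auto

definition Phi :: "(nat \<Rightarrow> nat) \<Rightarrow> (nat \<Rightarrow> nat) \<times> nat set" where
  "Phi \<sigma> = ((\<lambda>x. if x \<in> TT then g (\<sigma> (h x)) else x), {x \<in> TT. g (\<sigma> (h x)) = x})"

definition Psi :: "(nat \<Rightarrow> nat) \<Rightarrow> (nat \<Rightarrow> nat)" where
  "Psi \<pi> = (\<lambda>y. if y \<in> {1..m} then h (\<pi> (g y)) else y)"

lemma Phi_g:
  assumes "\<sigma> permutes {1..m}" "y \<in> {1..m}"
  shows "fst (Phi \<sigma>) (g y) = g (\<sigma> y)"
  using assms g_in hg unfolding Phi_def by simp

lemma Phi_perm:
  assumes s: "\<sigma> permutes {1..m}"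
  shows "fst (Phi \<sigma>) permutes {1..n}"
proof -
  have sb: "bij_betw \<sigma> {1..m} {1..m}" using s by (rule permutes_imp_bij)
  have "bij_betw (g \<circ> (\<sigma> \<circ> h)) TT TT"
    by (rule bij_betw_trans[OF bij_betw_trans[OF hbij sb] gbij])
  then have "bij_betw (fst (Phi \<sigma>)) TT TT"
    by (rule iffD1[OF bij_betw_cong, rotated]) (simp add: Phi_def)
  moreover have "\<And>x. x \<notin> TT \<Longrightarrow> fst (Phi \<sigma>) x = x" unfolding Phi_def by auto
  ultimately have "fst (Phi \<sigma>) permutes TT" by (rule bij_imp_permutes)
  then show ?thesis by (rule permutes_subset) auto
qed

lemma Phi_dec:
  assumes s: "\<sigma> permutes {1..m}"
  shows "Phi \<sigma> \<in> decorated_perms n" "cwfix n (Phi \<sigma>) = W"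
proof -
  have "fst (Phi \<sigma>) permutes {1..n}" by (rule Phi_perm[OF s])
  moreover have "snd (Phi \<sigma>) \<subseteq> {i\<in>{1..n}. fst (Phi \<sigma>) i = i}" by (auto simp: Phi_def)
  ultimately show "Phi \<sigma> \<in> decorated_perms n" unfolding decorated_perms_def
    by (cases "Phi \<sigma>") auto
  show "cwfix n (Phi \<sigma>) = W"
  proof (rule set_eqI)
    fix x show "x \<in> cwfix n (Phi \<sigma>) \<longleftrightarrow> x \<in> W"
    proof (cases "x \<in> TT")
      case True then show ?thesis unfolding cwfix_def Phi_def by auto
    next
      case False then show ?thesis using Wsub unfolding cwfix_def Phi_def by auto
    qed
  qed
qed

lemma Psi_Phi:
  assumes s: "\<sigma> permutes {1..m}"
  shows "Psi (fst (Phi \<sigma>)) = \<sigma>"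
proof
  fix y show "Psi (fst (Phi \<sigma>)) y = \<sigma> y"
  proof (cases "y \<in> {1..m}")
    case True
    have sy: "\<sigma> y \<in> {1..m}" by (rule iffD2[OF permutes_in_image[OF s] True])
    show ?thesis using True unfolding Psi_def by (simp add: Phi_g[OF s True] hg[OF sy])
  next
    case False
    have "\<sigma> y = y" using permutes_not_in[OF s False] .
    then show ?thesis unfolding Psi_def using False by auto
  qed
qed

lemma Psi_perm:
  assumes d: "(\<pi>, C) \<in> decorated_perms n" and c: "cwfix n (\<pi>, C) = W"
  shows "Psi \<pi> permutes {1..m}" "\<pi> permutes TT"
proof -
  have p: "\<pi> permutes {1..n}" and C: "C \<subseteq> {i\<in>{1..n}. \<pi> i = i}" using d unfolding decorated_perms_def by auto
  have Wfix: "\<pi> x = x" if "x \<in> W" for x using c that unfolding cwfix_def by auto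
  show pT: "\<pi> permutes TT" using p by (rule permutes_superset) (use Wfix in auto)
  have pb: "bij_betw \<pi> TT TT" using pT by (rule permutes_imp_bij)
  have "bij_betw (h \<circ> (\<pi> \<circ> g)) {1..m} {1..m}"
    by (rule bij_betw_trans[OF bij_betw_trans[OF gbij pb] hbij])
  then have "bij_betw (Psi \<pi>) {1..m} {1..m}"
    by (rule iffD1[OF bij_betw_cong, rotated]) (simp add: Psi_def)
  moreover have "\<And>x. x \<notin> {1..m} \<Longrightarrow> Psi \<pi> x = x" unfolding Psi_def by auto
  ultimately show "Psi \<pi> permutes {1..m}" by (rule bij_imp_permutes)
qed

lemma Phi_Psi:
  assumes d: "(\<pi>, C) \<in> decorated_perms n" and c: "cwfix n (\<pi>, C) = W"
  shows "Phi (Psi \<pi>) = (\<pi>, C)"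
proof -
  have p: "\<pi> permutes {1..n}" and C: "C \<subseteq> {i\<in>{1..n}. \<pi> i = i}" using d unfolding decorated_perms_def by auto
  have pT: "\<pi> permutes TT" using Psi_perm[OF d c] by simp
  have e: "g (Psi \<pi> (h x)) = \<pi> x" if x: "x \<in> TT" for x
  proof -
    have hx: "h x \<in> {1..m}" by (rule h_in[OF x])
    have px: "\<pi> x \<in> TT" by (rule iffD2[OF permutes_in_image[OF pT] x])
    show ?thesis unfolding Psi_def using hx by (simp add: gh[OF x] gh[OF px])
  qed
  have f: "fst (Phi (Psi \<pi>)) = \<pi>"
  proof
    fix x show "fst (Phi (Psi \<pi>)) x = \<pi> x"
    proof (cases "x \<in> TT")
      case True then show ?thesis unfolding Phi_def by (simp add: e)
    next
      case False
      have "\<pi> x = x" using permutes_not_in[OF pT False] .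
      then show ?thesis unfolding Phi_def using False by auto
    qed
  qed
  have CT: "C \<subseteq> TT" using c C unfolding cwfix_def by auto
  have s: "snd (Phi (Psi \<pi>)) = C"
  proof -
    have "snd (Phi (Psi \<pi>)) = {x \<in> TT. \<pi> x = x}" unfolding Phi_def using e by auto
    also have "\<dots> = C" using CT C c unfolding cwfix_def by auto
    finally show ?thesis .
  qed
  show ?thesis using f s by (simp add: prod_eq_iff)
qed

end

context relab begin

lemma Kstat_Phi:
  assumes s: "\<sigma> permutes {1..m}"
  shows "Kstat n (fst (Phi \<sigma>)) (snd (Phi \<sigma>)) = weak_exc m \<sigma>"
proof -
  let ?\<pi> = "fst (Phi \<sigma>)"
  have sy: "\<sigma> y \<in> {1..m}" if "y \<in> {1..m}" for y by (rule iffD2[OF permutes_in_image[OF s] that])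
  have ex: "{i\<in>{1..n}. ?\<pi> i > i} = g ` {y\<in>{1..m}. \<sigma> y > y}"
  proof (rule set_eqI)
    fix x show "x \<in> {i\<in>{1..n}. ?\<pi> i > i} \<longleftrightarrow> x \<in> g ` {y\<in>{1..m}. \<sigma> y > y}"
    proof (cases "x \<in> TT")
      case True
      have hx: "h x \<in> {1..m}" by (rule h_in[OF True])
      have "?\<pi> x = g (\<sigma> (h x))" using True by (simp add: Phi_def)
      then have "?\<pi> x > x \<longleftrightarrow> \<sigma> (h x) > h x" using g_less[OF hx sy[OF hx]] gh[OF True] by simp
      moreover have "x \<in> g ` {y\<in>{1..m}. \<sigma> y > y} \<longleftrightarrow> \<sigma> (h x) > h x"
      proof
        assume "x \<in> g ` {y\<in>{1..m}. \<sigma> y > y}"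
        then obtain y where "y \<in> {1..m}" "\<sigma> y > y" "x = g y" by blast
        then show "\<sigma> (h x) > h x" using hg by simp
      next
        assume "\<sigma> (h x) > h x"
        then show "x \<in> g ` {y\<in>{1..m}. \<sigma> y > y}" using hx gh[OF True] by (metis (mono_tags, lifting) imageI mem_Collect_eq)
      qed
      ultimately show ?thesis using True by auto
    next
      case False
      have "?\<pi> x = x" using False unfolding Phi_def by auto
      moreover have "x \<notin> g ` {1..m}" using False g_in by auto
      ultimately show ?thesis by auto
    qed
  qed
  have fx: "snd (Phi \<sigma>) = g ` {y\<in>{1..m}. \<sigma> y = y}"
  proof (rule set_eqI)
    fix x show "x \<in> snd (Phi \<sigma>) \<longleftrightarrow> x \<in> g ` {y\<in>{1..m}. \<sigma> y = y}"
    proof (cases "x \<in> TT")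
      case True
      have hx: "h x \<in> {1..m}" by (rule h_in[OF True])
      have "x \<in> snd (Phi \<sigma>) \<longleftrightarrow> \<sigma> (h x) = h x"
        using True g_eq[OF sy[OF hx] hx] gh[OF True] by (simp add: Phi_def)
      moreover have "x \<in> g ` {y\<in>{1..m}. \<sigma> y = y} \<longleftrightarrow> \<sigma> (h x) = h x"
      proof
        assume "x \<in> g ` {y\<in>{1..m}. \<sigma> y = y}"
        then obtain y where "y \<in> {1..m}" "\<sigma> y = y" "x = g y" by blast
        then show "\<sigma> (h x) = h x" using hg by simp
      next
        assume "\<sigma> (h x) = h x"
        then show "x \<in> g ` {y\<in>{1..m}. \<sigma> y = y}" using hx gh[OF True] by (metis (mono_tags, lifting) imageI mem_Collect_eq)
      qed
      ultimately show ?thesis by simp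
    next
      case False
      have "x \<notin> snd (Phi \<sigma>)" using False unfolding Phi_def by auto
      moreover have "x \<notin> g ` {1..m}" using False g_in by auto
      ultimately show ?thesis by auto
    qed
  qed
  have c1: "card (g ` {y\<in>{1..m}. \<sigma> y > y}) = card {y\<in>{1..m}. \<sigma> y > y}"
    by (rule card_image[OF inj_on_subset[OF ginj]]) auto
  have c2: "card (g ` {y\<in>{1..m}. \<sigma> y = y}) = card {y\<in>{1..m}. \<sigma> y = y}"
    by (rule card_image[OF inj_on_subset[OF ginj]]) auto
  have un: "{y\<in>{1..m}. \<sigma> y \<ge> y} = {y\<in>{1..m}. \<sigma> y > y} \<union> {y\<in>{1..m}. \<sigma> y = y}" by auto
  have c3: "card {y\<in>{1..m}. \<sigma> y \<ge> y} = card {y\<in>{1..m}. \<sigma> y > y} + card {y\<in>{1..m}. \<sigma> y = y}"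
    unfolding un by (rule card_Un_disjoint) auto
  show ?thesis unfolding Kstat_def weak_exc_def ex fx c1 c2 c3 ..
qed

lemma aligned_Phi:
  assumes s: "\<sigma> permutes {1..m}" and i: "i \<in> {1..m}" and j: "j \<in> {1..m}"
  shows "aligned n (fst (Phi \<sigma>)) (snd (Phi \<sigma>)) (g i) (g j) \<longleftrightarrow>
         aligned m \<sigma> {y\<in>{1..m}. \<sigma> y = y} i j"
proof -
  let ?\<pi> = "fst (Phi \<sigma>)" and ?C = "snd (Phi \<sigma>)"
  have sy: "\<sigma> y \<in> {1..m}" if "y \<in> {1..m}" for y by (rule iffD2[OF permutes_in_image[OF s] that])
  have pi: "?\<pi> (g i) = g (\<sigma> i)" and pj: "?\<pi> (g j) = g (\<sigma> j)" using Phi_g[OF s] i j by auto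
  have Ci: "g i \<in> ?C \<longleftrightarrow> \<sigma> i = i"
    using g_in[OF i] hg[OF i] g_eq[OF sy[OF i] i] by (simp add: Phi_def)
  have Cj: "g j \<in> ?C \<longleftrightarrow> \<sigma> j = j"
    using g_in[OF j] hg[OF j] g_eq[OF sy[OF j] j] by (simp add: Phi_def)
  have L: "[g i, ?\<pi> (g i), ?\<pi> (g j), g j] = map g [i, \<sigma> i, \<sigma> j, j]" using pi pj by simp
  have setL: "set [i, \<sigma> i, \<sigma> j, j] \<subseteq> {1..m}" using i j sy by auto
  have inj: "inj_on g (set [i, \<sigma> i, \<sigma> j, j])" using inj_on_subset[OF ginj setL] .
  have R: "remdups [g i, ?\<pi> (g i), ?\<pi> (g j), g j] = map g (remdups [i, \<sigma> i, \<sigma> j, j])"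
    unfolding L by (rule remdups_map_inj[OF inj])
  have cw: "cw_order n (remdups [g i, ?\<pi> (g i), ?\<pi> (g j), g j]) \<longleftrightarrow> cw_order m (remdups [i, \<sigma> i, \<sigma> j, j])"
    unfolding R by (rule cw_map_mono[where S="{1..m}"]) (use setL g_img gmono in auto)
  have e1: "g i \<noteq> g j \<longleftrightarrow> i \<noteq> j" using g_eq[OF i j] by simp
  have e2: "g i \<noteq> g (\<sigma> j) \<longleftrightarrow> i \<noteq> \<sigma> j" using g_eq[OF i sy[OF j]] by simp
  have e3: "g (\<sigma> i) \<noteq> g j \<longleftrightarrow> \<sigma> i \<noteq> j" using g_eq[OF sy[OF i] j] by simp
  have e4: "g (\<sigma> i) \<noteq> g (\<sigma> j) \<longleftrightarrow> \<sigma> i \<noteq> \<sigma> j" using g_eq[OF sy[OF i] sy[OF j]] by simp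
  have e5: "g (\<sigma> i) = g i \<longleftrightarrow> \<sigma> i = i" using g_eq[OF sy[OF i] i] by simp
  have e6: "g (\<sigma> j) = g j \<longleftrightarrow> \<sigma> j = j" using g_eq[OF sy[OF j] j] by simp
  show ?thesis unfolding aligned_def cw using pi pj e1 e2 e3 e4 e5 e6 Ci Cj i j by simp
qed

end

context relab begin

lemma al_Phi:
  assumes s: "\<sigma> permutes {1..m}"
  shows "al n (fst (Phi \<sigma>)) (snd (Phi \<sigma>)) = al m \<sigma> {y\<in>{1..m}. \<sigma> y = y} + card W * weak_exc m \<sigma>"
proof -
  define \<pi> where "\<pi> = fst (Phi \<sigma>)"
  define C where "C = snd (Phi \<sigma>)"
  define Cs where "Cs = {y\<in>{1..m}. \<sigma> y = y}"
  have dec: "(\<pi>, C) \<in> decorated_perms n" using Phi_dec(1)[OF s] unfolding \<pi>_def C_def by simp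
  have cwf: "cwfix n (\<pi>, C) = W" using Phi_dec(2)[OF s] unfolding \<pi>_def C_def by simp
  have Wfix: "\<pi> w = w" "w \<notin> C" "w \<in> {1..n}" if "w \<in> W" for w
    using that cwf unfolding cwfix_def by auto
  have notW: "x \<notin> W" if "aligned n \<pi> C x y" for x y
  proof
    assume "x \<in> W" then show False using that Wfix unfolding aligned_def by auto
  qed
  have alP: "aligned n \<pi> C (g a) (g b) \<longleftrightarrow> aligned m \<sigma> Cs a b" if "a \<in> {1..m}" "b \<in> {1..m}" for a b
    unfolding \<pi>_def C_def Cs_def by (rule aligned_Phi[OF s that])
  define P where "P = {{i, j} | i j. i \<in> {1..n} \<and> j \<in> {1..n} \<and> aligned n \<pi> C i j}"
  define Q where "Q = {{i, j} | i j. i \<in> {1..m} \<and> j \<in> {1..m} \<and> aligned m \<sigma> Cs i j}"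
  define U where "U = (\<lambda>w. (\<lambda>x. {x, w}) ` {x\<in>{1..n}. aligned n \<pi> C x w})"
  have PU: "P = image g ` Q \<union> (\<Union>w\<in>W. U w)"
  proof
    show "P \<subseteq> image g ` Q \<union> (\<Union>w\<in>W. U w)"
    proof
      fix e assume "e \<in> P"
      then obtain i j where e: "e = {i, j}" and ij: "i \<in> {1..n}" "j \<in> {1..n}" "aligned n \<pi> C i j"
        unfolding P_def by blast
      have iT: "i \<in> TT" using ij notW by blast
      show "e \<in> image g ` Q \<union> (\<Union>w\<in>W. U w)"
      proof (cases "j \<in> W")
        case True
        then have "e \<in> U j" unfolding U_def e using ij by blast
        then show ?thesis using True by blast
      next
        case False
        then have jT: "j \<in> TT" using ij by blast
        have "aligned n \<pi> C (g (h i)) (g (h j))" using ij gh[OF iT] gh[OF jT] by simp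
        then have "aligned m \<sigma> Cs (h i) (h j)" using alP h_in[OF iT] h_in[OF jT] by blast
        then have "{h i, h j} \<in> Q" unfolding Q_def using h_in[OF iT] h_in[OF jT] by blast
        moreover have "e = g ` {h i, h j}" using e gh[OF iT] gh[OF jT] by simp
        ultimately show ?thesis by blast
      qed
    qed
    show "image g ` Q \<union> (\<Union>w\<in>W. U w) \<subseteq> P"
    proof
      fix e assume "e \<in> image g ` Q \<union> (\<Union>w\<in>W. U w)"
      then show "e \<in> P"
      proof
        assume "e \<in> image g ` Q"
        then obtain a b where e: "e = g ` {a, b}" and ab: "a \<in> {1..m}" "b \<in> {1..m}" "aligned m \<sigma> Cs a b"
          unfolding Q_def by blast
        have "aligned n \<pi> C (g a) (g b)" using alP ab by blast
        moreover have "g a \<in> {1..n}" "g b \<in> {1..n}" using g_in ab by auto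
        moreover have "e = {g a, g b}" using e by simp
        ultimately show "e \<in> P" unfolding P_def by blast
      next
        assume "e \<in> (\<Union>w\<in>W. U w)"
        then obtain w x where "w \<in> W" "x \<in> {1..n}" "aligned n \<pi> C x w" "e = {x, w}"
          unfolding U_def by blast
        then show "e \<in> P" unfolding P_def using Wfix(3) by blast
      qed
    qed
  qed
  have QP: "Q \<subseteq> Pow {1..m}" unfolding Q_def by auto
  have finQ: "finite Q" by (rule finite_subset[OF QP]) simp
  have finU: "finite (U w)" for w unfolding U_def by simp
  have finW: "finite W" by (rule finite_subset[OF Wsub]) simp
  have disj: "image g ` Q \<inter> (\<Union>w\<in>W. U w) = {}"
  proof -
    have A: "e \<subseteq> TT" if "e \<in> image g ` Q" for e
    proof -
      obtain q where q: "q \<in> Q" "e = g ` q" using \<open>e \<in> image g ` Q\<close> by (rule imageE)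
      have "q \<subseteq> {1..m}" using q(1) QP by (rule rev_subsetD[THEN PowD])
      then show ?thesis using q(2) g_in by auto
    qed
    have B: "e \<inter> W \<noteq> {}" if "e \<in> (\<Union>w\<in>W. U w)" for e using that unfolding U_def by blast
    have "False" if "e \<in> image g ` Q" "e \<in> (\<Union>w\<in>W. U w)" for e
    proof -
      have "e \<subseteq> TT" "e \<inter> W \<noteq> {}" using that A B by simp_all
      then show False by auto
    qed
    then show ?thesis by auto
  qed
  have c1: "card (image g ` Q) = card Q"
    by (rule card_image[OF inj_on_subset[OF inj_on_image_Pow[OF ginj] QP]])
  have cU: "card (U w) = weak_exc m \<sigma>" if w: "w \<in> W" for w
  proof -
    have "inj_on (\<lambda>x. {x, w}) {x\<in>{1..n}. aligned n \<pi> C x w}"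
    proof (rule inj_onI)
      fix x y assume "x \<in> {x\<in>{1..n}. aligned n \<pi> C x w}" "y \<in> {x\<in>{1..n}. aligned n \<pi> C x w}" "{x, w} = {y, w}"
      moreover have "x \<noteq> w" "y \<noteq> w" using calculation unfolding aligned_def by auto
      ultimately show "x = y" by (metis doubleton_eq_iff)
    qed
    then have "card (U w) = card {x\<in>{1..n}. aligned n \<pi> C x w}" unfolding U_def by (rule card_image)
    also have "\<dots> = Kstat n \<pi> C" using count_aligned_fixed[OF dec Wfix(3)[OF w] Wfix(1)[OF w] Wfix(2)[OF w]] .
    also have "\<dots> = weak_exc m \<sigma>" using Kstat_Phi[OF s] unfolding \<pi>_def C_def .
    finally show ?thesis .
  qed
  have cUU: "card (\<Union>w\<in>W. U w) = (\<Sum>w\<in>W. card (U w))"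
  proof (rule card_UN_disjoint[OF finW])
    show "\<forall>i\<in>W. finite (U i)" using finU by blast
    show "\<forall>i\<in>W. \<forall>j\<in>W. i \<noteq> j \<longrightarrow> U i \<inter> U j = {}"
    proof (intro ballI impI)
      fix w1 w2 assume w: "w1 \<in> W" "w2 \<in> W" "w1 \<noteq> w2"
      show "U w1 \<inter> U w2 = {}"
      proof (rule ccontr)
        assume "U w1 \<inter> U w2 \<noteq> {}"
        then obtain e where e: "e \<in> U w1" "e \<in> U w2" by auto
        obtain x where x: "x \<in> {x\<in>{1..n}. aligned n \<pi> C x w1}" "e = {x, w1}"
          using e(1) unfolding U_def by (rule imageE)
        obtain y where y: "y \<in> {x\<in>{1..n}. aligned n \<pi> C x w2}" "e = {y, w2}"
          using e(2) unfolding U_def by (rule imageE)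
        have xy: "aligned n \<pi> C x w1" "aligned n \<pi> C y w2" "{x, w1} = {y, w2}" using x y by auto
        have "x \<notin> W" "y \<notin> W" using notW xy by auto
        then show False using xy(3) w by (metis doubleton_eq_iff)
      qed
    qed
  qed
  have "al n \<pi> C = card P" unfolding al_def P_def ..
  also have "\<dots> = card (image g ` Q) + card (\<Union>w\<in>W. U w)"
    unfolding PU by (rule card_Un_disjoint) (use finQ finU finW disj in auto)
  also have "\<dots> = card Q + card W * weak_exc m \<sigma>" using c1 cUU cU by simp
  also have "card Q = al m \<sigma> Cs" unfolding al_def Q_def ..
  finally show ?thesis unfolding \<pi>_def C_def Cs_def .
qed

end

context relab begin

lemma m_eq: "m = n - card W"
proof -
  have "m = card TT" using bij_betw_same_card[OF gbij] by simp
  also have "\<dots> = n - card W" using Wsub by (simp add: card_Diff_subset finite_subset)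
  finally show ?thesis .
qed

lemma sumW:
  "(\<Sum>p\<in>{p. p \<in> {(\<pi>, C) \<in> decorated_perms n. Kstat n \<pi> C = k} \<and> cwfix n p = W}.
      (case p of (\<pi>, C) \<Rightarrow> monom (1::int) (k * (n - k) - al n \<pi> C))) = E_poly k m"
proof -
  define S where "S = {\<sigma>. \<sigma> permutes {1..m} \<and> weak_exc m \<sigma> = k}"
  define Tg where "Tg = {p. p \<in> {(\<pi>, C) \<in> decorated_perms n. Kstat n \<pi> C = k} \<and> cwfix n p = W}"
  define F where "F = (\<lambda>p. case p of (\<pi>, C) \<Rightarrow> monom (1::int) (k * (n - k) - al n \<pi> C))"
  have bij: "bij_betw Phi S Tg"
  proof (rule bij_betw_byWitness[where f' = "\<lambda>p. Psi (fst p)"])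
    show "\<forall>a\<in>S. Psi (fst (Phi a)) = a" unfolding S_def using Psi_Phi by blast
    show "\<forall>a'\<in>Tg. Phi (Psi (fst a')) = a'"
    proof
      fix p assume "p \<in> Tg"
      then obtain \<pi> C where p: "p = (\<pi>, C)" "(\<pi>, C) \<in> decorated_perms n" "cwfix n (\<pi>, C) = W"
        unfolding Tg_def by (cases p) auto
      show "Phi (Psi (fst p)) = p" using Phi_Psi[OF p(2,3)] p(1) by simp
    qed
    show "Phi ` S \<subseteq> Tg"
    proof
      fix q assume "q \<in> Phi ` S"
      then obtain \<sigma> where s: "\<sigma> \<in> S" "q = Phi \<sigma>" by (rule imageE)
      have sp: "\<sigma> permutes {1..m}" and sk: "weak_exc m \<sigma> = k" using s unfolding S_def by auto
      have "Phi \<sigma> \<in> decorated_perms n" "cwfix n (Phi \<sigma>) = W" using Phi_dec[OF sp] by auto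
      moreover have "Kstat n (fst (Phi \<sigma>)) (snd (Phi \<sigma>)) = k" using Kstat_Phi[OF sp] sk by simp
      ultimately show "q \<in> Tg" unfolding Tg_def s(2) by (cases "Phi \<sigma>") auto
    qed
    show "(\<lambda>p. Psi (fst p)) ` Tg \<subseteq> S"
    proof
      fix q assume "q \<in> (\<lambda>p. Psi (fst p)) ` Tg"
      then obtain p where p: "p \<in> Tg" "q = Psi (fst p)" by (rule imageE)
      then obtain \<pi> C where pc: "p = (\<pi>, C)" "(\<pi>, C) \<in> decorated_perms n" "cwfix n (\<pi>, C) = W" "Kstat n \<pi> C = k"
        unfolding Tg_def by (cases p) auto
      have qp: "q permutes {1..m}" using Psi_perm[OF pc(2,3)] p(2) pc(1) by simp
      have "weak_exc m q = Kstat n (fst (Phi q)) (snd (Phi q))" using Kstat_Phi[OF qp] by simp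
      also have "Phi q = (\<pi>, C)" using Phi_Psi[OF pc(2,3)] p(2) pc(1) by simp
      finally have "weak_exc m q = k" using pc(4) by simp
      then show "q \<in> S" unfolding S_def using qp by simp
    qed
  qed
  have "sum F Tg = sum (\<lambda>\<sigma>. F (Phi \<sigma>)) S" by (rule sum.reindex_bij_betw[OF bij, symmetric])
  also have "\<dots> = (\<Sum>\<sigma>\<in>S. monom 1 (k * (m - k) - al m \<sigma> {i\<in>{1..m}. \<sigma> i = i}))"
  proof (rule sum.cong[OF refl])
    fix \<sigma> assume "\<sigma> \<in> S"
    then have sp: "\<sigma> permutes {1..m}" and sk: "weak_exc m \<sigma> = k" unfolding S_def by auto
    have km: "k \<le> m" using sk unfolding weak_exc_def
      by (metis (no_types, lifting) card_atLeastAtMost card_mono diff_Suc_1 finite_atLeastAtMost mem_Collect_eq subsetI)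
    have nm: "n = m + card W" using m_eq Wsub card_mono[of "{1..n}" W] by simp
    have e1: "k * (n - k) = k * (m - k) + card W * k" using km nm
      by (simp add: algebra_simps Nat.add_diff_assoc2)
    have "F (Phi \<sigma>) = monom 1 (k * (n - k) - al n (fst (Phi \<sigma>)) (snd (Phi \<sigma>)))"
      unfolding F_def by (cases "Phi \<sigma>") simp
    also have "al n (fst (Phi \<sigma>)) (snd (Phi \<sigma>)) = al m \<sigma> {i\<in>{1..m}. \<sigma> i = i} + card W * k"
      using al_Phi[OF sp] sk by simp
    also have "k * (n - k) - (al m \<sigma> {i\<in>{1..m}. \<sigma> i = i} + card W * k) = k * (m - k) - al m \<sigma> {i\<in>{1..m}. \<sigma> i = i}"
      unfolding e1 by simp
    finally show "F (Phi \<sigma>) = monom 1 (k * (m - k) - al m \<sigma> {i\<in>{1..m}. \<sigma> i = i})" .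
  qed
  also have "\<dots> = E_poly k m" unfolding E_poly_def S_def ..
  finally show ?thesis unfolding F_def Tg_def .
qed

end

lemma exists_relab:
  assumes W: "W \<subseteq> {1..n}"
  shows "\<exists>g. relab n (n - card W) W g"
proof -
  define T where "T = {1..n} - W"
  have finT: "finite T" unfolding T_def by simp
  have cT: "card T = n - card W" unfolding T_def using W by (simp add: card_Diff_subset finite_subset)
  define g where "g = (\<lambda>y. enumerate T (y - 1))"
  have mono: "strict_mono_on {1..card T} g"
  proof (rule strict_mono_onI)
    fix r s assume "r \<in> {1..card T}" "s \<in> {1..card T}" "r < s"
    then show "g r < g s" unfolding g_def by (intro finite_enumerate_mono[OF _ finT]) auto
  qed
  have b1: "bij_betw (\<lambda>y. y - 1) {1..card T} {..<card T}"
    by (rule bij_betw_byWitness[where f'=Suc]) auto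
  have b2: "bij_betw (enumerate T) {..<card T} T" by (rule finite_bij_enumerate[OF finT])
  have "bij_betw (enumerate T \<circ> (\<lambda>y. y - 1)) {1..card T} T" by (rule bij_betw_trans[OF b1 b2])
  then have bij: "bij_betw g {1..card T} T" unfolding g_def comp_def .
  have mono': "strict_mono_on {1..n - card W} g" using mono cT by simp
  have bij': "bij_betw g {1..n - card W} ({1..n} - W)" using bij cT unfolding T_def by simp
  show ?thesis
    using W mono' bij' by (intro exI[of _ g]) (unfold_locales)
qed

theorem mainTheorem8:
  fixes k n :: nat
  assumes "k \<le> n"
  shows "A_poly k n = (\<Sum>i = 0..n. of_nat (n choose i) * E_poly k (n - i))"
proof -
  define D where "D = {(\<pi>, C) \<in> decorated_perms n. Kstat n \<pi> C = k}"
  define F where "F = (\<lambda>p. case p of (\<pi>, C) \<Rightarrow> monom (1::int) (k * (n - k) - al n \<pi> C))"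
  have finD: "finite D"
  proof (rule finite_subset)
    show "D \<subseteq> {\<pi>. \<pi> permutes {1..n}} \<times> Pow {1..n}" unfolding D_def decorated_perms_def by auto
    show "finite ({\<pi>. \<pi> permutes {1..n}} \<times> Pow {1..n})"
      using finite_permutations[of "{1..n}"] by simp
  qed
  have img: "cwfix n ` D \<subseteq> Pow {1..n}" unfolding cwfix_def by auto
  have "A_poly k n = sum F D" unfolding A_poly_def D_def F_def ..
  also have "\<dots> = (\<Sum>W\<in>Pow {1..n}. sum F {p. p \<in> D \<and> cwfix n p = W})"
    by (rule sum.group[OF finD _ img, symmetric]) simp
  also have "\<dots> = (\<Sum>W\<in>Pow {1..n}. E_poly k (n - card W))"
  proof (rule sum.cong[OF refl])
    fix W assume "W \<in> Pow {1..n}"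
    then have W: "W \<subseteq> {1..n}" by simp
    obtain g where r: "relab n (n - card W) W g" using exists_relab[OF W] by blast
    show "sum F {p. p \<in> D \<and> cwfix n p = W} = E_poly k (n - card W)"
      using relab.sumW[OF r, of k] unfolding F_def D_def .
  qed
  also have "\<dots> = (\<Sum>i\<in>{0..n}. (\<Sum>W\<in>{x. x \<in> Pow {1..n} \<and> card x = i}. E_poly k (n - card W)))"
  proof (rule sum.group[symmetric])
    show "card ` Pow {1..n} \<subseteq> {0..n}"
    proof
      fix c assume "c \<in> card ` Pow {1..n}"
      then obtain W where "W \<subseteq> {1..n}" "c = card W" by auto
      then show "c \<in> {0..n}" using card_mono[of "{1..n}" W] by simp
    qed
  qed simp_all
  also have "\<dots> = (\<Sum>i = 0..n. of_nat (n choose i) * E_poly k (n - i))"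
  proof (rule sum.cong[OF refl])
    fix i assume "i \<in> {0..n}"
    have "(\<Sum>W\<in>{x. x \<in> Pow {1..n} \<and> card x = i}. E_poly k (n - card W))
        = (\<Sum>W\<in>{x. x \<in> Pow {1..n} \<and> card x = i}. E_poly k (n - i))" by (rule sum.cong) auto
    also have "\<dots> = of_nat (card {x. x \<in> Pow {1..n} \<and> card x = i}) * E_poly k (n - i)" by simp
    also have "card {x. x \<in> Pow {1..n} \<and> card x = i} = n choose i"
    proof -
      have "{x. x \<in> Pow {1..n} \<and> card x = i} = {B. B \<subseteq> {1..n} \<and> card B = i}" by auto
      then show ?thesis using n_subsets[of "{1..n}" i] by simp
    qed
    finally show "(\<Sum>W\<in>{x. x \<in> Pow {1..n} \<and> card x = i}. E_poly k (n - card W)) = of_nat (n choose i) * E_poly k (n - i)" .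
  qed
  finally show ?thesis .
qed

end
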